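(* Consider the symmetric robot rendezvous system $$\dot{x}_k(t)=\tfrac{1}{2}\big(x_{k-1}(t)+x_{k+1}(t)\big)-x_k(t),\quad k\in\mathbb{Z},\ t\ge0,$$ with initial constellation $x_0=(x_k(0))_{k\in\mathbb{Z}}\in\ell^\infty(\mathbb{Z})$. Then $x_0$ is good if and only if there exists $c\in\mathbb{C}$ such that $$\sup_{k\in\mathbb{Z}}\bigg|\frac{1}{n}\sum_{j=1}^n\frac{1}{2^j}\sum_{\ell=0}^j\binom{j}{\ell}x_{k-j+2\ell}(0)-c\bigg|\to0\quad\text{as } n\to\infty, \tag{$*$}$$ and in this case $\sup_{k\in\mathbb{Z}}|x_k(t)-c|\to0$ as $t\to\infty$. Furthermore, if the quantity on the left of $( * )$ is $O(n^{-1})$ as $n\to\infty$, then $\sup_{k\in\mathbb{Z}}|x_k(t)-c|=O(t^{-1})$ as $t\to\infty$.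
   Context: $\ell^\infty(\mathbb{Z})$ is the Banach space of bounded doubly infinite complex sequences with the supremum norm. $S$ denotes the right-shift $S(x_k)=(x_{k-1})$ and $S^{-1}$ the left-shift $S^{-1}(x_k)=(x_{k+1})$ on $\ell^\infty(\mathbb{Z})$. For $x_0\in\ell^\infty(\mathbb{Z})$, the solution of the system is $x(t)=(x_k(t))_{k\in\mathbb{Z}}=\exp\big(t(\tfrac12(S+S^{-1})-I)\big)x_0$, $t\ge0$. An initial constellation $x_0$ is called good if there exist constants $c_k\in\mathbb{C}$, $k\in\mathbb{Z}$, such that the corresponding solution satisfies $\sup_{k\in\mathbb{Z}}|x_k(t)-c_k|\to0$ as $t\to\infty$. $a(t)=O(b(t))$ means there is $C>0$ with $a(t)\le Cb(t)$ for all sufficiently large arguments. *)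

theory Defs
  imports "HOL-Analysis.Analysis" "HOL-Library.Landau_Symbols"
begin

text \<open>Elements of l-infinity over the integers are represented as functions
  int to complex with bounded range.\<close>

definition shiftR :: "(int \<Rightarrow> complex) \<Rightarrow> int \<Rightarrow> complex" where
  "shiftR x k = x (k - 1)"

definition shiftL :: "(int \<Rightarrow> complex) \<Rightarrow> int \<Rightarrow> complex" where
  "shiftL x k = x (k + 1)"

definition rdv_op :: "(int \<Rightarrow> complex) \<Rightarrow> int \<Rightarrow> complex" where
  "rdv_op x k = (shiftR x k + shiftL x k) / 2 - x k"

text \<open>Solution x(t) = exp(tA) x0, written out coordinatewise: the k-th coordinate of
  the (norm-convergent) operator exponential series applied to x0.\<close>
definition rdv_sol :: "(int \<Rightarrow> complex) \<Rightarrow> real \<Rightarrow> int \<Rightarrow> complex" where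
  "rdv_sol x0 t k = (\<Sum>n. complex_of_real (t ^ n / fact n) * (rdv_op ^^ n) x0 k)"

definition good :: "(int \<Rightarrow> complex) \<Rightarrow> bool" where
  "good x0 \<longleftrightarrow> (\<exists>c :: int \<Rightarrow> complex. uniform_limit UNIV (rdv_sol x0) c at_top)"

definition rdv_avg :: "(int \<Rightarrow> complex) \<Rightarrow> nat \<Rightarrow> int \<Rightarrow> complex" where
  "rdv_avg x0 n k = (1 / of_nat n) * (\<Sum>j=1..n. (1 / 2 ^ j) *
      (\<Sum>l=0..j. of_nat (j choose l) * x0 (k - int j + 2 * int l)))"

end

theory Submission
  imports Defs "HOL-Analysis.Analysis"
begin
instance bcontfun :: (topological_space, complete_space) complete_space
proof
  fix f :: "nat \<Rightarrow> ('a, 'b) bcontfun"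
  assume "Cauchy f"
  then obtain g where "uniform_limit UNIV f g sequentially"
    using uniformly_convergent_eq_cauchy[of "\<lambda>_. True" f]
    unfolding Cauchy_def uniform_limit_sequentially_iff
    by (metis dist_fun_lt_imp_dist_val_lt)
  from uniform_limit_bcontfunE[OF this sequentially_bot]
  obtain l' where "g = apply_bcontfun l'" "(f \<longlonglongrightarrow> l')" by metis
  then show "convergent f"
    by (intro convergentI)
qed

instance bcontfun :: (topological_space, banach) banach ..

type_synonym linf = "(int, complex) bcontfun"

typedef op = "UNIV :: (linf \<Rightarrow>\<^sub>L linf) set" morphisms opb Op by auto
setup_lifting type_definition_op

instantiation op :: real_normed_vector
begin
lift_definition norm_op :: "op \<Rightarrow> real" is norm .
lift_definition minus_op :: "op \<Rightarrow> op \<Rightarrow> op" is "(-)" .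
lift_definition plus_op :: "op \<Rightarrow> op \<Rightarrow> op" is "(+)" .
lift_definition uminus_op :: "op \<Rightarrow> op" is "uminus" .
lift_definition zero_op :: "op" is "0" .
lift_definition scaleR_op :: "real \<Rightarrow> op \<Rightarrow> op" is "scaleR" .
definition dist_op :: "op \<Rightarrow> op \<Rightarrow> real" where "dist_op a b = norm (a - b)"
definition sgn_op :: "op \<Rightarrow> op" where "sgn_op x = scaleR (inverse (norm x)) x"
definition uniformity_op :: "(op \<times> op) filter" where
  "uniformity_op = (INF e\<in>{0 <..}. principal {(x, y). dist x y < e})"
definition open_op :: "op set \<Rightarrow> bool"
  where "open_op S = (\<forall>x\<in>S. \<forall>\<^sub>F (x', y) in uniformity. x' = x \<longrightarrow> y \<in> S)"
instance
  apply standard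
  unfolding dist_op_def open_op_def sgn_op_def uniformity_op_def
  apply (rule refl | (transfer, force simp: algebra_simps norm_triangle_ineq))+
  done
end

instantiation op :: real_normed_algebra_1
begin
lift_definition times_op :: "op \<Rightarrow> op \<Rightarrow> op" is "blinfun_compose" .
lift_definition one_op :: "op" is "id_blinfun" .

lemma norm_id_linf: "norm (id_blinfun :: linf \<Rightarrow>\<^sub>L linf) = 1"
proof (rule antisym)
  show "norm (id_blinfun :: linf \<Rightarrow>\<^sub>L linf) \<le> 1" by (rule norm_blinfun_id_le)
  have n1: "norm (const_bcontfun (1::complex) :: linf) = 1"
  proof (rule antisym)
    show "norm (const_bcontfun (1::complex) :: linf) \<le> 1"
      by (rule norm_bound) simp
    show "1 \<le> norm (const_bcontfun (1::complex) :: linf)"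
      using norm_bounded[of "const_bcontfun (1::complex) :: linf" 0] by simp
  qed
  have "norm (blinfun_apply (id_blinfun :: linf \<Rightarrow>\<^sub>L linf) (const_bcontfun 1))
      \<le> norm (id_blinfun :: linf \<Rightarrow>\<^sub>L linf) * norm (const_bcontfun (1::complex) :: linf)"
    by (rule norm_blinfun)
  then show "1 \<le> norm (id_blinfun :: linf \<Rightarrow>\<^sub>L linf)" using n1 by simp
qed

instance
proof
  fix a b c :: op and r :: real
  show "a * b * c = a * (b * c)"
    by transfer (auto intro!: blinfun_eqI)
  show "1 * a = a" by transfer (auto intro!: blinfun_eqI)
  show "a * 1 = a" by transfer (auto intro!: blinfun_eqI)
  show "(a + b) * c = a * c + b * c"
    by transfer (auto intro!: blinfun_eqI simp: blinfun.bilinear_simps)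
  show "a * (b + c) = a * b + a * c"
    by transfer (auto intro!: blinfun_eqI simp: blinfun.bilinear_simps)
  show "r *\<^sub>R a * b = r *\<^sub>R (a * b)"
    by transfer (auto intro!: blinfun_eqI simp: blinfun.bilinear_simps)
  show "a * r *\<^sub>R b = r *\<^sub>R (a * b)"
    by transfer (auto intro!: blinfun_eqI simp: blinfun.bilinear_simps)
  show "norm (a * b) \<le> norm a * norm b"
    by transfer (rule norm_blinfun_compose)
  show "norm (1::op) = 1" by transfer (rule norm_id_linf)
  show "(0::op) \<noteq> 1"
  proof
    assume "(0::op) = 1"
    then have "norm (0::op) = norm (1::op)" by simp
    moreover have "norm (1::op) = 1" by transfer (rule norm_id_linf)
    ultimately show False by simp
  qed
qed
end

lemma dist_op_rep: "dist a b = dist (opb a) (opb b)"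
  by (simp add: dist_norm norm_op.rep_eq minus_op.rep_eq)

instance op :: banach
proof
  fix X :: "nat \<Rightarrow> op"
  assume "Cauchy X"
  then have "Cauchy (\<lambda>n. opb (X n))"
    unfolding Cauchy_def dist_op_rep .
  then obtain L where L: "(\<lambda>n. opb (X n)) \<longlonglongrightarrow> L"
    using Cauchy_convergent[of "\<lambda>n. opb (X n)"] unfolding convergent_def by blast
  have "X \<longlonglongrightarrow> Op L"
    using L unfolding tendsto_iff dist_op_rep Op_inverse[OF UNIV_I] .
  then show "convergent X" by (auto simp: convergent_def)
qed

lemma pois_sums0: "(\<lambda>n. s^n / fact n) sums exp (s::real)"
  using exp_converges[of s] by (simp add: divide_inverse mult.commute)

lemma pois_step: "real (Suc n) * (s^(Suc n) / fact (Suc n)) = s * (s^n / fact n)"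
proof -
  have "fact (Suc n) = real (Suc n) * (fact n :: real)" by (simp only: fact_Suc of_nat_fact)
  then show ?thesis by (simp del: of_nat_Suc add: field_simps)
qed

lemma pois_sums1: "(\<lambda>n. real n * (s^n / fact n)) sums (s * exp (s::real))"
proof -
  have "(\<lambda>n. s * (s^n / fact n)) sums (s * exp s)"
    by (rule sums_mult[OF pois_sums0])
  moreover note pois_step
  ultimately have "(\<lambda>n. real (Suc n) * (s^(Suc n) / fact (Suc n))) sums (s * exp s)"
    by simp
  then show ?thesis
    by (subst (asm) sums_Suc_iff) simp
qed

lemma pois_sums2: "(\<lambda>n. (real n)^2 * (s^n / fact n)) sums (s * (s + 1) * exp (s::real))"
proof -
  have "(\<lambda>n. s * (real n * (s^n / fact n) + s^n / fact n)) sums (s * (s * exp s + exp s))"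
    by (rule sums_mult[OF sums_add[OF pois_sums1 pois_sums0]])
  moreover have "\<And>n. (real (Suc n))^2 * (s^(Suc n) / fact (Suc n))
      = s * (real n * (s^n / fact n) + s^n / fact n)"
    by (simp only: power2_eq_square mult.assoc pois_step) (simp add: algebra_simps add_divide_distrib)
  ultimately have "(\<lambda>n. (real (Suc n))^2 * (s^(Suc n) / fact (Suc n))) sums (s * (s + 1) * exp s)"
    by (simp add: algebra_simps)
  then show ?thesis
    by (subst (asm) sums_Suc_iff) simp
qed

lemma pois_var: "(\<lambda>n. (s^n / fact n) * (real n - s)^2) sums (s * exp (s::real))"
proof -
  have "(\<lambda>n. (real n)^2 * (s^n / fact n) - 2 * s * (real n * (s^n / fact n)) + s^2 * (s^n / fact n))
     sums (s * (s + 1) * exp s - 2 * s * (s * exp s) + s^2 * exp s)"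
    by (intro sums_add sums_diff sums_mult pois_sums0 pois_sums1 pois_sums2)
  moreover have "s * (s + 1) * exp s - 2 * s * (s * exp s) + s^2 * exp s = s * exp s"
    by (simp add: algebra_simps power2_eq_square)
  ultimately show ?thesis
    by (simp add: algebra_simps power2_eq_square)
qed

definition pb :: "real \<Rightarrow> nat \<Rightarrow> real" where
  "pb s n = (if n = 0 then 0 else s^(n-1) / fact (n-1)) - s^n / fact n"

lemma pb_abs: assumes "s > 0" shows "\<bar>pb s n\<bar> = (s^n / fact n) * \<bar>real n - s\<bar> / s"
proof (cases n)
  case 0 then show ?thesis using assms by (simp add: pb_def)
next
  case (Suc m)
  have st: "real n * (s^n / fact n) = s * (s^m / fact m)" using pois_step[of m s] Suc by simp
  have "s^m / fact m = real n * (s^n / fact n) / s" using st assms by (simp add: field_simps)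
  then have "pb s n = real n * (s^n / fact n) / s - s^n / fact n"
    by (simp add: pb_def Suc)
  also have "\<dots> = (s^n / fact n) * (real n - s) / s" using assms by (simp add: field_simps)
  finally have "pb s n = (s^n / fact n) * (real n - s) / s" .
  then show ?thesis using assms by (simp add: abs_mult abs_divide)
qed

lemma amgm_aux: assumes "s > 0" "x \<ge> 0"
  shows "x / s \<le> (x^2 / (s * sqrt s) + 1 / sqrt s) / 2"
proof -
  have q: "sqrt s > 0" using assms by simp
  have sq: "sqrt s * sqrt s = s" using assms by simp
  have "0 \<le> (x - sqrt s)^2" by simp
  then have "2 * x * sqrt s \<le> x^2 + s" using sq by (simp add: power2_eq_square algebra_simps)
  then have "2 * x * sqrt s / (2 * s * sqrt s) \<le> (x^2 + s) / (2 * s * sqrt s)"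
    using q assms by (intro divide_right_mono) auto
  moreover have "2 * x * sqrt s / (2 * s * sqrt s) = x / s" using q assms by (simp add: field_simps)
  moreover have "(x^2 + s) / (2 * s * sqrt s) = (x^2 / (s * sqrt s) + 1 / sqrt s) / 2"
    using q assms by (simp add: field_simps)
  ultimately show ?thesis by simp
qed

lemma pb_summable_bound:
  assumes "s > 0"
  shows "summable (\<lambda>n. \<bar>pb s n\<bar>) \<and> (\<Sum>n. \<bar>pb s n\<bar>) \<le> exp s / sqrt s"
proof -
  let ?g = "\<lambda>n. ((s^n / fact n) * (real n - s)^2 / (s * sqrt s) + (s^n / fact n) / sqrt s) / 2"
  have gs: "?g sums ((s * exp s / (s * sqrt s) + exp s / sqrt s) / 2)"
  proof -
    have h1: "(\<lambda>n. (s^n / fact n) * (real n - s)^2 / (s * sqrt s)) sums (s * exp s / (s * sqrt s))"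
      by (rule sums_divide[OF pois_var])
    have h2: "(\<lambda>n. (s^n / fact n) / sqrt s) sums (exp s / sqrt s)"
      by (rule sums_divide[OF pois_sums0])
    show ?thesis by (rule sums_divide[OF sums_add[OF h1 h2]])
  qed
  have v1: "s * exp s / (s * sqrt s) = exp s / sqrt s" using assms by simp
  have val: "(s * exp s / (s * sqrt s) + exp s / sqrt s) / 2 = exp s / sqrt s"
    unfolding v1 by simp
  have le: "\<bar>pb s n\<bar> \<le> ?g n" for n
  proof -
    have a0: "s^n / fact n \<ge> 0" using assms by simp
    have "\<bar>pb s n\<bar> = (s^n / fact n) * (\<bar>real n - s\<bar> / s)" using pb_abs[OF assms] by simp
    also have "\<dots> \<le> (s^n / fact n) * ((\<bar>real n - s\<bar>^2 / (s * sqrt s) + 1 / sqrt s) / 2)"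
      using amgm_aux[OF assms, of "\<bar>real n - s\<bar>"] a0 by (intro mult_left_mono) auto
    also have "\<dots> = ?g n" by (simp only: power2_abs distrib_left add_divide_distrib times_divide_eq_right mult_1_right)
    finally show ?thesis .
  qed
  have sg: "summable (\<lambda>n. \<bar>pb s n\<bar>)"
    using le by (intro summable_comparison_test'[OF sums_summable[OF gs], of 0]) auto
  have "(\<Sum>n. \<bar>pb s n\<bar>) \<le> suminf ?g"
    by (rule suminf_le[OF le sg sums_summable[OF gs]])
  also have "\<dots> = exp s / sqrt s" using sums_unique[OF gs] val by simp
  finally show ?thesis using sg by simp
qed

lemma exp_shift_bound:
  fixes V :: "'a::{real_normed_algebra_1,banach}"
  assumes V: "norm V \<le> 1" and s: "s > 0"
  shows "norm (exp (s *\<^sub>R V) * (V - 1)) \<le> exp s / sqrt s"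
proof -
  let ?a = "\<lambda>n. s^n / fact n"
  have e: "(\<lambda>n. (s *\<^sub>R V)^n /\<^sub>R fact n) sums exp (s *\<^sub>R V)" by (rule exp_converges)
  have P: "(\<lambda>n. ?a n *\<^sub>R V^n) sums exp (s *\<^sub>R V)"
    using e by (simp add: divide_inverse mult.commute)
  have Q: "(\<lambda>n. ?a n *\<^sub>R V^(Suc n)) sums (exp (s *\<^sub>R V) * V)"
    using sums_mult2[OF P, of V] by (simp add: power_commutes)
  let ?R = "\<lambda>n. (if n = 0 then 0 else ?a (n - 1)) *\<^sub>R V^n"
  have "(\<lambda>n. ?R (Suc n)) sums (exp (s *\<^sub>R V) * V)" using Q by simp
  then have R: "?R sums (exp (s *\<^sub>R V) * V)" by (subst (asm) sums_Suc_iff) simp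
  have D: "(\<lambda>n. pb s n *\<^sub>R V^n) sums (exp (s *\<^sub>R V) * (V - 1))"
    using sums_diff[OF R P] by (simp add: pb_def scaleR_diff_left right_diff_distrib)
  have sb: "summable (\<lambda>n. \<bar>pb s n\<bar>)" and sbb: "(\<Sum>n. \<bar>pb s n\<bar>) \<le> exp s / sqrt s"
    using pb_summable_bound[OF s] by auto
  have nle: "norm (pb s n *\<^sub>R V^n) \<le> \<bar>pb s n\<bar>" for n
  proof -
    have "norm (V^n) \<le> norm V ^ n" by (rule norm_power_ineq)
    also have "\<dots> \<le> 1" using V by (simp add: power_le_one)
    finally show ?thesis by (simp add: mult_left_le)
  qed
  have sn: "summable (\<lambda>n. norm (pb s n *\<^sub>R V^n))"
    by (rule summable_comparison_test'[OF sb]) (use nle in auto)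
  have "norm (exp (s *\<^sub>R V) * (V - 1)) = norm (\<Sum>n. pb s n *\<^sub>R V^n)"
    using D sums_unique by metis
  also have "\<dots> \<le> (\<Sum>n. norm (pb s n *\<^sub>R V^n))" by (rule summable_norm[OF sn])
  also have "\<dots> \<le> (\<Sum>n. \<bar>pb s n\<bar>)" by (rule suminf_le[OF nle sn sb])
  finally show ?thesis using sbb by simp
qed

lemma exp_shift_split:
  fixes V :: "'a::{real_normed_algebra_1,banach}"
  shows "exp (s *\<^sub>R (V - 1)) = exp (- s) *\<^sub>R exp (s *\<^sub>R V)"
proof -
  have e1: "s *\<^sub>R (V - 1) = s *\<^sub>R V + of_real (- s)"
    unfolding of_real_def scaleR_diff_right by simp
  have c: "(s *\<^sub>R V) * of_real (- s) = of_real (- s) * (s *\<^sub>R V)"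
    by (simp add: of_real_def)
  have "exp (s *\<^sub>R (V - 1)) = exp (s *\<^sub>R V) * exp (of_real (- s))"
    unfolding e1 by (rule exp_add_commuting[OF c])
  also have "\<dots> = exp (s *\<^sub>R V) * of_real (exp (- s))"
    by (simp only: exp_of_real)
  also have "\<dots> = exp (- s) *\<^sub>R exp (s *\<^sub>R V)"
    by (simp add: of_real_def)
  finally show ?thesis .
qed

lemma exp_contr:
  fixes V :: "'a::{real_normed_algebra_1,banach}"
  assumes V: "norm V \<le> 1" and s: "s \<ge> 0"
  shows "norm (exp (s *\<^sub>R (V - 1))) \<le> 1"
proof -
  have "norm (exp (s *\<^sub>R V)) \<le> exp (norm (s *\<^sub>R V))" by (rule norm_exp)
  also have "\<dots> \<le> exp s" using V s by (simp add: mult_left_le)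
  finally have h: "norm (exp (s *\<^sub>R V)) \<le> exp s" .
  have "norm (exp (s *\<^sub>R (V - 1))) = exp (- s) * norm (exp (s *\<^sub>R V))"
    by (simp add: exp_shift_split)
  also have "\<dots> \<le> exp (- s) * exp s" using h by (intro mult_left_mono) auto
  also have "\<dots> = 1" by (simp add: exp_minus)
  finally show ?thesis .
qed

lemma exp_contr_diff:
  fixes V :: "'a::{real_normed_algebra_1,banach}"
  assumes V: "norm V \<le> 1" and s: "s > 0"
  shows "norm (exp (s *\<^sub>R (V - 1)) * (V - 1)) \<le> 1 / sqrt s"
proof -
  have "norm (exp (s *\<^sub>R (V - 1)) * (V - 1)) = exp (- s) * norm (exp (s *\<^sub>R V) * (V - 1))"
    by (simp add: exp_shift_split)
  also have "\<dots> \<le> exp (- s) * (exp s / sqrt s)"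
    by (intro mult_left_mono exp_shift_bound V s) simp
  also have "\<dots> = 1 / sqrt s" by (simp add: exp_minus field_simps)
  finally show ?thesis .
qed

definition opa :: "op \<Rightarrow> linf \<Rightarrow> linf" where "opa X u = blinfun_apply (opb X) u"

lemma opa_mult: "opa (X * Y) u = opa X (opa Y u)"
  by (simp add: opa_def times_op.rep_eq)
lemma opa_one: "opa 1 u = u"
  by (simp add: opa_def one_op.rep_eq)
lemma opa_add: "opa (X + Y) u = opa X u + opa Y u"
  by (simp add: opa_def plus_op.rep_eq blinfun.bilinear_simps)
lemma opa_diff: "opa (X - Y) u = opa X u - opa Y u"
  by (simp add: opa_def minus_op.rep_eq blinfun.bilinear_simps)
lemma opa_scaleR: "opa (r *\<^sub>R X) u = r *\<^sub>R opa X u"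
  by (simp add: opa_def scaleR_op.rep_eq blinfun.bilinear_simps)
lemma opa_zero: "opa 0 u = 0"
  by (simp add: opa_def zero_op.rep_eq)
lemma opa_add_right: "opa X (u + v) = opa X u + opa X v"
  by (simp add: opa_def blinfun.bilinear_simps)
lemma opa_diff_right: "opa X (u - v) = opa X u - opa X v"
  by (simp add: opa_def blinfun.bilinear_simps)
lemma opa_scaleR_right: "opa X (r *\<^sub>R u) = r *\<^sub>R opa X u"
  by (simp add: opa_def blinfun.bilinear_simps)
lemma opa_norm: "norm (opa X u) \<le> norm X * norm u"
  by (simp add: opa_def norm_op.rep_eq norm_blinfun)
lemma op_eqI: "(\<And>u. opa X u = opa Y u) \<Longrightarrow> X = Y"
  by (metis opa_def blinfun_eqI opb_inject)

lemma bounded_linear_opa_left: "bounded_linear (\<lambda>X. opa X u)"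
  by (rule bounded_linear_intro[where K = "norm u"])
     (auto simp: opa_add opa_scaleR intro: opa_norm)

lemma opa_sum: "opa (sum f I) u = (\<Sum>i\<in>I. opa (f i) u)"
proof (induction I rule: infinite_finite_induct)
  case (infinite A) then show ?case by (simp add: opa_zero)
next
  case empty then show ?case by (simp add: opa_zero)
next
  case (insert x F) then show ?case by (simp add: opa_add)
qed

lemma bcf_sum: "apply_bcontfun (sum f I) k = (\<Sum>i\<in>I. apply_bcontfun (f i) k)"
proof (induction I rule: infinite_finite_induct)
  case (infinite A) then show ?case by simp
next
  case empty then show ?case by simp
next
  case (insert x F) then show ?case by simp
qed

lemma bcontfun_int: "bounded (range f) \<Longrightarrow> (f :: int \<Rightarrow> complex) \<in> bcontfun"
  by (simp add: bcontfun_def)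

lemma Bc_apply: "bounded (range f) \<Longrightarrow> apply_bcontfun (Bcontfun (f :: int \<Rightarrow> complex)) = f"
  by (simp add: Bcontfun_inverse bcontfun_int)

definition shR :: "linf \<Rightarrow> linf" where "shR u = Bcontfun (\<lambda>k. apply_bcontfun u (k - 1))"
definition shL :: "linf \<Rightarrow> linf" where "shL u = Bcontfun (\<lambda>k. apply_bcontfun u (k + 1))"

lemma bounded_shift: "bounded (range (\<lambda>k. apply_bcontfun (u::linf) (k + d)))"
  by (rule bounded_subset[OF bounded_apply_bcontfun[of u]]) auto

lemma shR_apply[simp]: "apply_bcontfun (shR u) k = apply_bcontfun u (k - 1)"
  using Bc_apply[OF bounded_shift[of u "-1"]] by (simp add: shR_def)
lemma shL_apply[simp]: "apply_bcontfun (shL u) k = apply_bcontfun u (k + 1)"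
  using Bc_apply[OF bounded_shift[of u 1]] by (simp add: shL_def)

lemma norm_shR: "norm (shR u) \<le> norm u"
  by (rule norm_bound) (simp add: norm_bounded)
lemma norm_shL: "norm (shL u) \<le> norm u"
  by (rule norm_bound) (simp add: norm_bounded)

lemma bl_shR: "bounded_linear shR"
  by (rule bounded_linear_intro[where K = 1])
     (auto intro!: bcontfun_eqI simp: norm_shR)
lemma bl_shL: "bounded_linear shL"
  by (rule bounded_linear_intro[where K = 1])
     (auto intro!: bcontfun_eqI simp: norm_shL)

definition Sop :: op where "Sop = Op (Blinfun shR)"
definition Lop :: op where "Lop = Op (Blinfun shL)"

lemma opa_S: "opa Sop u = shR u"
  by (simp add: opa_def Sop_def Op_inverse bounded_linear_Blinfun_apply[OF bl_shR])
lemma opa_L: "opa Lop u = shL u"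
  by (simp add: opa_def Lop_def Op_inverse bounded_linear_Blinfun_apply[OF bl_shL])

lemma SL: "Sop * Lop = 1"
  by (rule op_eqI) (auto intro!: bcontfun_eqI simp: opa_mult opa_S opa_L opa_one)
lemma LS: "Lop * Sop = 1"
  by (rule op_eqI) (auto intro!: bcontfun_eqI simp: opa_mult opa_S opa_L opa_one)

lemma norm_op_le: "(\<And>u. norm (opa X u) \<le> norm u) \<Longrightarrow> norm X \<le> 1"
  unfolding norm_op.rep_eq opa_def by (rule norm_blinfun_bound) auto

lemma norm_S: "norm Sop \<le> 1"
  by (rule norm_op_le) (simp add: opa_S norm_shR)
lemma norm_L: "norm Lop \<le> 1"
  by (rule norm_op_le) (simp add: opa_L norm_shL)

definition Top :: op where "Top = (1/2) *\<^sub>R (Sop + Lop)"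
definition Aop :: op where "Aop = Top - 1"
definition Et :: "real \<Rightarrow> op" where "Et t = exp (t *\<^sub>R Aop)"
definition Msum :: "nat \<Rightarrow> op" where "Msum n = (\<Sum>j\<in>{1..n}. Top ^ j)"
definition Mn :: "nat \<Rightarrow> op" where "Mn n = (1 / real n) *\<^sub>R Msum n"

lemma norm_T: "norm Top \<le> 1"
proof -
  have "norm (Sop + Lop) \<le> 2" using norm_triangle_ineq[of Sop Lop] norm_S norm_L by simp
  then show ?thesis by (simp add: Top_def)
qed

lemma norm_A: "norm Aop \<le> 2"
  using norm_triangle_ineq4[of Top 1] norm_T by (simp add: Aop_def)

lemma pow_comm: "x * y = y * x \<Longrightarrow> x ^ n * y = y * (x ^ n :: 'a::monoid_mult)"
  by (induction n) (simp_all add: mult.assoc[symmetric], metis mult.assoc)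

lemma exp_comm:
  fixes x y :: "'a::{real_normed_algebra_1,banach}"
  assumes "x * y = y * x"
  shows "exp x * y = y * exp x"
proof -
  have s: "summable (\<lambda>n. x ^ n /\<^sub>R fact n)" by (rule summable_exp_generic)
  have "exp x * y = (\<Sum>n. (x ^ n /\<^sub>R fact n) * y)"
    unfolding exp_def by (rule suminf_mult2[OF s])
  also have "\<dots> = (\<Sum>n. y * (x ^ n /\<^sub>R fact n))"
    using pow_comm[OF assms] by simp
  also have "\<dots> = y * exp x"
    unfolding exp_def by (rule suminf_mult[OF s])
  finally show ?thesis .
qed

lemma A_split: "t *\<^sub>R Aop = (t/2) *\<^sub>R (Sop - 1) + (t/2) *\<^sub>R (Lop - 1)"
proof -
  have h: "(t/2) *\<^sub>R (1::op) + (t/2) *\<^sub>R 1 = t *\<^sub>R 1" by (simp add: scaleR_add_left[symmetric])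
  show ?thesis using h by (simp add: Aop_def Top_def algebra_simps scaleR_diff_right scaleR_add_right)
qed

lemma SL_comm: "(Sop - 1) * (Lop - 1) = (Lop - 1) * (Sop - 1)"
  by (simp add: algebra_simps SL LS)

lemma A_prod: "Aop = (- 1/2) *\<^sub>R ((Sop - 1) * (Lop - 1))"
proof -
  have "(Sop - 1) * (Lop - 1) = (1 + 1) - (Sop + Lop)" by (simp add: algebra_simps SL)
  also have "\<dots> = (-2) *\<^sub>R Aop"
    by (simp add: Aop_def Top_def scaleR_diff_right scaleR_2)
  finally show ?thesis by simp
qed

definition eS :: "real \<Rightarrow> op" where "eS t = exp ((t/2) *\<^sub>R (Sop - 1))"
definition eL :: "real \<Rightarrow> op" where "eL t = exp ((t/2) *\<^sub>R (Lop - 1))"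

lemma Et_split: "Et t = eS t * eL t"
  unfolding Et_def eS_def eL_def A_split
  by (rule exp_add_commuting) (simp add: SL_comm)

lemma norm_Et: "t \<ge> 0 \<Longrightarrow> norm (Et t) \<le> 1"
proof -
  assume t: "t \<ge> 0"
  have "norm (Et t) \<le> norm (eS t) * norm (eL t)" unfolding Et_split by (rule norm_mult_ineq)
  also have "\<dots> \<le> 1 * 1"
    using t by (intro mult_mono) (auto simp: eS_def eL_def intro!: exp_contr norm_S norm_L)
  finally show ?thesis by simp
qed

lemma eL_comm: "eL t * (Sop - 1) = (Sop - 1) * eL t"
  unfolding eL_def by (rule exp_comm) (simp add: SL_comm)

lemma norm_EtA: assumes t: "t > 0" shows "norm (Et t * Aop) \<le> 1 / t"
proof -
  have "Et t * Aop = (- 1/2) *\<^sub>R ((eS t * (Sop - 1)) * (eL t * (Lop - 1)))"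
  proof -
    have "eL t * ((Sop - 1) * (Lop - 1)) = (Sop - 1) * (eL t * (Lop - 1))"
      by (simp add: mult.assoc[symmetric] eL_comm)
    then show ?thesis unfolding Et_split A_prod by (simp add: mult.assoc)
  qed
  then have "norm (Et t * Aop) = (1/2) * norm ((eS t * (Sop - 1)) * (eL t * (Lop - 1)))"
    by simp
  also have "\<dots> \<le> (1/2) * (norm (eS t * (Sop - 1)) * norm (eL t * (Lop - 1)))"
    by (intro mult_left_mono norm_mult_ineq) simp
  also have "\<dots> \<le> (1/2) * ((1 / sqrt (t/2)) * (1 / sqrt (t/2)))"
    using t by (intro mult_left_mono mult_mono) (auto simp: eS_def eL_def intro!: exp_contr_diff norm_S norm_L)
  also have "\<dots> = 1 / t" using t by (simp add: real_sqrt_divide field_simps)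
  finally show ?thesis .
qed

lemma Et_T_comm: "Et t * Top = Top * Et t"
proof -
  have "Et t * Aop = Aop * Et t" unfolding Et_def by (rule exp_times_scaleR_commute)
  then show ?thesis unfolding Aop_def by (simp add: algebra_simps)
qed

lemma Et_Msum_comm: "Et t * Msum n = Msum n * Et t"
  unfolding Msum_def sum_distrib_left sum_distrib_right
  by (rule sum.cong) (simp_all add: pow_comm[OF Et_T_comm[symmetric]])

lemma Et_Mn_comm: "Et t * Mn n = Mn n * Et t"
  unfolding Mn_def by (simp add: Et_Msum_comm)

lemma A_Msum: "Aop * Msum n = Top ^ (Suc n) - Top"
proof (induction n)
  case 0 then show ?case by (simp add: Msum_def)
next
  case (Suc n)
  have "Msum (Suc n) = Msum n + Top ^ Suc n" by (simp add: Msum_def)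
  then show ?case using Suc by (simp add: Aop_def algebra_simps)
qed

lemma norm_A_Mn: "norm (Aop * Mn n) \<le> 2 / real n"
proof -
  have "norm (Top ^ Suc n - Top) \<le> norm (Top ^ Suc n) + norm Top" by (rule norm_triangle_ineq4)
  also have "\<dots> \<le> 1 + 1"
    using norm_T norm_power_ineq[of Top "Suc n"] power_le_one[of "norm Top" "Suc n"]
    by (intro add_mono) auto
  finally have h: "norm (Top ^ Suc n - Top) \<le> 2" by simp
  have "Aop * Mn n = (1 / real n) *\<^sub>R (Top ^ Suc n - Top)"
    by (simp add: Mn_def A_Msum)
  then have "norm (Aop * Mn n) = (1 / real n) * norm (Top ^ Suc n - Top)" by simp
  also have "\<dots> \<le> (1 / real n) * 2" using h by (intro mult_left_mono) auto
  finally show ?thesis by simp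
qed

lemma Et_mvt:
  assumes t: "t \<ge> 0"
  shows "norm (opa (Et t) v - v) \<le> t * norm (opa Aop v)"
proof -
  let ?g = "\<lambda>s. opa (Et s) v"
  have der: "(?g has_derivative (\<lambda>h. h *\<^sub>R opa (Et s * Aop) v)) (at s within {0..t})" for s
  proof -
    have "((\<lambda>s. exp (s *\<^sub>R Aop)) has_vector_derivative exp (s *\<^sub>R Aop) * Aop) (at s within {0..t})"
      by (rule exp_scaleR_has_vector_derivative_right)
    from bounded_linear.has_vector_derivative[OF bounded_linear_opa_left this]
    show ?thesis by (simp add: Et_def has_vector_derivative_def)
  qed
  have B: "onorm (\<lambda>h. h *\<^sub>R opa (Et s * Aop) v) \<le> norm (opa Aop v)" if "s \<in> {0..t}" for s
  proof (rule onorm_bound)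
    fix h :: real
    have "norm (opa (Et s * Aop) v) = norm (opa (Et s) (opa Aop v))" by (simp add: opa_mult)
    also have "\<dots> \<le> norm (Et s) * norm (opa Aop v)" by (rule opa_norm)
    also have "\<dots> \<le> 1 * norm (opa Aop v)"
      using that by (intro mult_right_mono norm_Et) auto
    finally show "norm (h *\<^sub>R opa (Et s * Aop) v) \<le> norm (opa Aop v) * norm h"
      by (simp add: mult.commute mult_left_mono)
  qed simp
  have "norm (?g t - ?g 0) \<le> norm (opa Aop v) * norm (t - 0)"
    by (rule differentiable_bound[where S = "{0..t}" and f' = "\<lambda>s h. h *\<^sub>R opa (Et s * Aop) v"])
       (use t der B in auto)
  moreover have "?g 0 = v" by (simp add: Et_def opa_one)
  ultimately show ?thesis using t by (simp add: mult.commute)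
qed

lemma cscale: "r *\<^sub>R (z::complex) = complex_of_real r * z"
  by (simp add: scaleR_conv_of_real)

lemma bl_eval: "bounded_linear (\<lambda>w::linf. apply_bcontfun w k)"
  by (rule bounded_linear_intro[where K = 1]) (auto intro: norm_bounded)

lemma opa_T_apply: "apply_bcontfun (opa Top v) k = (apply_bcontfun v (k - 1) + apply_bcontfun v (k + 1)) / 2"
  by (simp add: Top_def opa_scaleR opa_add opa_S opa_L cscale)

lemma opa_A_fun: "apply_bcontfun (opa Aop v) = rdv_op (apply_bcontfun v)"
  by (rule ext) (simp add: Aop_def opa_diff opa_one opa_T_apply rdv_op_def shiftR_def shiftL_def)

lemma opa_Apow_fun: "apply_bcontfun (opa (Aop ^ n) v) = (rdv_op ^^ n) (apply_bcontfun v)"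
proof (induction n)
  case 0 then show ?case by (simp add: opa_one)
next
  case (Suc n)
  have "apply_bcontfun (opa (Aop ^ Suc n) v) = apply_bcontfun (opa Aop (opa (Aop ^ n) v))"
    by (simp add: opa_mult)
  also have "\<dots> = rdv_op (apply_bcontfun (opa (Aop ^ n) v))" by (rule opa_A_fun)
  finally show ?case using Suc by simp
qed

lemma sol_eq:
  assumes bdd: "bounded (range x0)"
  shows "rdv_sol x0 t k = apply_bcontfun (opa (Et t) (Bcontfun x0)) k"
proof -
  let ?u = "Bcontfun x0"
  have u: "apply_bcontfun ?u = x0" by (rule Bc_apply[OF bdd])
  have bl: "bounded_linear (\<lambda>X. apply_bcontfun (opa X ?u) k)"
    using bounded_linear_compose[OF bl_eval bounded_linear_opa_left] .
  have s: "summable (\<lambda>n. (t *\<^sub>R Aop) ^ n /\<^sub>R fact n)" by (rule summable_exp_generic)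
  have "apply_bcontfun (opa (Et t) ?u) k = (\<Sum>n. apply_bcontfun (opa ((t *\<^sub>R Aop) ^ n /\<^sub>R fact n) ?u) k)"
    unfolding Et_def exp_def by (rule bounded_linear.suminf[OF bl s])
  also have "\<dots> = (\<Sum>n. complex_of_real (t ^ n / fact n) * (rdv_op ^^ n) x0 k)"
  proof (rule suminf_cong)
    fix n
    have "apply_bcontfun (opa ((t *\<^sub>R Aop) ^ n /\<^sub>R fact n) ?u) k
        = (t ^ n / fact n) *\<^sub>R apply_bcontfun (opa (Aop ^ n) ?u) k"
      by (simp add: opa_scaleR divide_inverse mult.commute)
    also have "\<dots> = complex_of_real (t ^ n / fact n) * (rdv_op ^^ n) x0 k"
      by (simp add: opa_Apow_fun u cscale)
    finally show "apply_bcontfun (opa ((t *\<^sub>R Aop) ^ n /\<^sub>R fact n) ?u) k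
        = complex_of_real (t ^ n / fact n) * (rdv_op ^^ n) x0 k" .
  qed
  finally show ?thesis by (simp add: rdv_sol_def)
qed

lemma pascal_sum:
  fixes w :: "nat \<Rightarrow> complex"
  shows "(\<Sum>l\<le>Suc j. of_nat (Suc j choose l) * w l) = (\<Sum>l\<le>j. of_nat (j choose l) * (w l + w (Suc l)))"
proof -
  have a: "(\<Sum>l\<le>Suc j. of_nat (Suc j choose l) * w l)
      = w 0 + (\<Sum>l\<le>j. of_nat (j choose l) * w (Suc l)) + (\<Sum>l\<le>j. of_nat (j choose Suc l) * w (Suc l))"
    unfolding sum.atMost_Suc_shift by (simp add: distrib_right sum.distrib del: sum.atMost_Suc)
  have b1: "(\<Sum>l\<le>Suc j. of_nat (j choose l) * w l) = (\<Sum>l\<le>j. of_nat (j choose l) * w l)"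
    by (simp add: sum.atMost_Suc)
  have b2: "(\<Sum>l\<le>Suc j. of_nat (j choose l) * w l) = w 0 + (\<Sum>l\<le>j. of_nat (j choose Suc l) * w (Suc l))"
    unfolding sum.atMost_Suc_shift by (simp del: sum.atMost_Suc)
  have c: "(\<Sum>l\<le>j. of_nat (j choose l) * w l) = w 0 + (\<Sum>l\<le>j. of_nat (j choose Suc l) * w (Suc l))"
    using b1[symmetric] b2 by (rule trans)
  have "(\<Sum>l\<le>j. of_nat (j choose l) * (w l + w (Suc l)))
      = (\<Sum>l\<le>j. of_nat (j choose l) * w l) + (\<Sum>l\<le>j. of_nat (j choose l) * w (Suc l))"
    by (simp only: distrib_left sum.distrib)
  also have "\<dots> = w 0 + (\<Sum>l\<le>j. of_nat (j choose Suc l) * w (Suc l)) + (\<Sum>l\<le>j. of_nat (j choose l) * w (Suc l))"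
    by (simp only: c)
  also have "\<dots> = w 0 + (\<Sum>l\<le>j. of_nat (j choose l) * w (Suc l)) + (\<Sum>l\<le>j. of_nat (j choose Suc l) * w (Suc l))"
    by algebra
  also have "\<dots> = (\<Sum>l\<le>Suc j. of_nat (Suc j choose l) * w l)"
    by (rule a[symmetric])
  finally show ?thesis by (rule sym)
qed

lemma opa_Tpow_apply:
  "apply_bcontfun (opa (Top ^ j) v) k
     = (1 / 2 ^ j) * (\<Sum>l=0..j. of_nat (j choose l) * apply_bcontfun v (k - int j + 2 * int l))"
proof (induction j arbitrary: k v)
  case 0 then show ?case by (simp add: opa_one)
next
  case (Suc j)
  let ?w = "\<lambda>l. apply_bcontfun v (k - int (Suc j) + 2 * int l)"
  have "apply_bcontfun (opa (Top ^ Suc j) v) k = apply_bcontfun (opa (Top ^ j) (opa Top v)) k"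
    by (simp only: opa_mult power_Suc2)
  also have "\<dots> = (1 / 2 ^ j) * (\<Sum>l=0..j. of_nat (j choose l) *
        apply_bcontfun (opa Top v) (k - int j + 2 * int l))"
    by (rule Suc.IH)
  also have "\<dots> = (1 / 2 ^ j) * (\<Sum>l\<le>j. of_nat (j choose l) * ((?w l + ?w (Suc l)) / 2))"
    by (simp add: atLeast0AtMost opa_T_apply algebra_simps)
  also have "\<dots> = (1 / 2 ^ Suc j) * (\<Sum>l\<le>j. of_nat (j choose l) * (?w l + ?w (Suc l)))"
    by (simp add: sum_divide_distrib[symmetric])
  also have "\<dots> = (1 / 2 ^ Suc j) * (\<Sum>l=0..Suc j. of_nat (Suc j choose l) * ?w l)"
    by (simp only: atLeast0AtMost pascal_sum)
  finally show ?case .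
qed

lemma avg_eq:
  assumes bdd: "bounded (range x0)"
  shows "rdv_avg x0 n k = apply_bcontfun (opa (Mn n) (Bcontfun x0)) k"
proof -
  have u: "apply_bcontfun (Bcontfun x0) = x0" by (rule Bc_apply[OF bdd])
  have "apply_bcontfun (opa (Mn n) (Bcontfun x0)) k
      = complex_of_real (1 / real n) * (\<Sum>j\<in>{1..n}. apply_bcontfun (opa (Top ^ j) (Bcontfun x0)) k)"
    by (simp only: Mn_def Msum_def opa_scaleR opa_sum scaleR_bcontfun.rep_eq bcf_sum cscale)
  also have "\<dots> = complex_of_real (1 / real n) * (\<Sum>j\<in>{1..n}. (1 / 2 ^ j) *
      (\<Sum>l=0..j. of_nat (j choose l) * x0 (k - int j + 2 * int l)))"
    by (simp only: opa_Tpow_apply u)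
  also have "\<dots> = rdv_avg x0 n k"
    by (simp add: rdv_avg_def)
  finally show ?thesis by (rule sym)
qed

definition Rsum :: "nat \<Rightarrow> op" where "Rsum N = (1 / real N) *\<^sub>R (\<Sum>n\<in>{1..N}. Msum n)"

lemma T_Msum: "Top * Msum N = (\<Sum>n\<in>{1..N}. Top ^ Suc n)"
  by (simp add: Msum_def sum_distrib_left)

lemma A_Rsum: assumes "N \<ge> 1" shows "Aop * Rsum N = Top * Mn N - Top"
proof -
  have "Aop * Rsum N = (1 / real N) *\<^sub>R (\<Sum>n\<in>{1..N}. Aop * Msum n)"
    by (simp add: Rsum_def sum_distrib_left)
  also have "\<dots> = (1 / real N) *\<^sub>R ((\<Sum>n\<in>{1..N}. Top ^ Suc n) - (\<Sum>n\<in>{1..N}. Top))"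
    by (simp only: A_Msum sum_subtractf)
  also have "(\<Sum>n\<in>{1..N}. Top) = real N *\<^sub>R Top" by (simp add: scaleR_conv_of_real)
  also have "(1 / real N) *\<^sub>R ((\<Sum>n\<in>{1..N}. Top ^ Suc n) - real N *\<^sub>R Top)
      = (1 / real N) *\<^sub>R (Top * Msum N) - ((1 / real N) * real N) *\<^sub>R Top"
    by (simp only: T_Msum scaleR_diff_right scaleR_scaleR)
  also have "\<dots> = Top * Mn N - Top" using assms by (simp add: Mn_def)
  finally show ?thesis .
qed

lemma key_id: assumes "N \<ge> 1"
  shows "Et t = - (Et t * Aop) * (1 + Rsum N) + Et t * Top * Mn N"
proof -
  have one: "1 = - Aop * (1 + Rsum N) + Top * Mn N"
    using A_Rsum[OF assms] by (simp add: algebra_simps Aop_def)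
  have "Et t = Et t * (- Aop * (1 + Rsum N) + Top * Mn N)"
    by (subst one[symmetric]) simp
  then show ?thesis by (simp add: algebra_simps)
qed

lemma norm_Msum: "norm (Msum n) \<le> real n"
proof -
  have "norm (Msum n) \<le> (\<Sum>j\<in>{1..n}. norm (Top ^ j))" unfolding Msum_def by (rule norm_sum)
  also have "\<dots> \<le> (\<Sum>j\<in>{1..n}. 1)"
    using norm_T by (intro sum_mono) (metis norm_power_ineq order_trans power_le_one norm_ge_zero)
  finally show ?thesis by simp
qed

lemma norm_Mn: "norm (Mn n) \<le> 1"
proof (cases "n = 0")
  case True then show ?thesis by (simp add: Mn_def)
next
  case False
  have "norm (Mn n) = (1 / real n) * norm (Msum n)" by (simp add: Mn_def)
  also have "\<dots> \<le> (1 / real n) * real n" by (intro mult_left_mono norm_Msum) simp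
  finally show ?thesis using False by simp
qed

lemma norm_ETA: "t \<ge> 0 \<Longrightarrow> norm (Et t * Top) \<le> 1"
  using norm_mult_ineq[of "Et t" Top] norm_Et[of t] norm_T
  by (smt (verit) mult_le_one norm_ge_zero)

lemma est_main:
  assumes N: "N \<ge> 1" and t: "t > 0"
  shows "norm (opa (Et t) u) \<le> norm (u + opa (Rsum N) u) / t + norm (opa (Mn N) u)"
proof -
  have "opa (Et t) u = - opa (Et t * Aop) (u + opa (Rsum N) u) + opa (Et t * Top) (opa (Mn N) u)"
    by (subst key_id[OF N]) (simp add: opa_add opa_mult opa_one opa_add_right opa_diff
        opa_zero mult.assoc minus_mult_left[symmetric] algebra_simps)
  then have "norm (opa (Et t) u) \<le> norm (opa (Et t * Aop) (u + opa (Rsum N) u)) + norm (opa (Et t * Top) (opa (Mn N) u))"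
    by (metis norm_minus_cancel norm_triangle_ineq)
  also have "\<dots> \<le> (1 / t) * norm (u + opa (Rsum N) u) + 1 * norm (opa (Mn N) u)"
    using t by (intro add_mono order_trans[OF opa_norm] mult_right_mono norm_EtA norm_ETA) auto
  finally show ?thesis by simp
qed

lemma core_qual:
  assumes "((\<lambda>n. opa (Mn n) u) \<longlongrightarrow> 0) sequentially"
  shows "((\<lambda>t. opa (Et t) u) \<longlongrightarrow> 0) at_top"
proof (rule tendstoI)
  fix e :: real assume e: "e > 0"
  from tendstoD[OF assms, of "e/2"] e
  have "eventually (\<lambda>n. norm (opa (Mn n) u) < e/2) sequentially" by simp
  then obtain N0 where N0: "\<And>n. n \<ge> N0 \<Longrightarrow> norm (opa (Mn n) u) < e/2"
    unfolding eventually_sequentially by blast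
  define N where "N = max N0 1"
  have N1: "N \<ge> 1" and NN: "norm (opa (Mn N) u) < e/2" using N0[of N] by (auto simp: N_def)
  define K where "K = norm (u + opa (Rsum N) u)"
  have K0: "K \<ge> 0" by (simp add: K_def)
  have "\<forall>t\<ge>2 * K / e + 1. dist (opa (Et t) u) 0 < e"
  proof (intro allI impI)
    fix t assume tt: "t \<ge> 2 * K / e + 1"
    have "2 * K / e \<ge> 0" using K0 e by simp
    then have t0: "t > 0" using tt by linarith
    have "K / t < e / 2"
    proof -
      have "2 * K / e < t" using tt by linarith
      then have "2 * K < t * e" using e by (simp add: divide_less_eq)
      then show ?thesis using t0 by (simp add: divide_less_eq field_simps)
    qed
    moreover have "norm (opa (Et t) u) \<le> K / t + norm (opa (Mn N) u)"
      unfolding K_def by (rule est_main[OF N1 t0])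
    ultimately have "norm (opa (Et t) u) < e" using NN by linarith
    then show "dist (opa (Et t) u) 0 < e" by simp
  qed
  then show "eventually (\<lambda>t. dist (opa (Et t) u) 0 < e) at_top"
    unfolding eventually_at_top_linorder by blast
qed

lemma Msum_Mn: "n \<ge> 1 \<Longrightarrow> Msum n = real n *\<^sub>R Mn n"
  by (simp add: Mn_def)

lemma core_rate:
  assumes C: "C \<ge> 0" and hyp: "\<And>n. n \<ge> N0 \<Longrightarrow> norm (opa (Mn n) u) \<le> C / real n"
  shows "\<exists>C'. \<forall>t\<ge>1. norm (opa (Et t) u) \<le> C' / t"
proof -
  define K where "K = C + real N0 * norm u"
  have Kb: "norm (opa (Msum n) u) \<le> K" for n
  proof (cases "n \<ge> N0 \<and> n \<ge> 1")
    case True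
    have "norm (opa (Msum n) u) = real n * norm (opa (Mn n) u)"
      using True by (simp add: Msum_Mn opa_scaleR)
    also have "\<dots> \<le> real n * (C / real n)" using hyp True by (intro mult_left_mono) auto
    also have "\<dots> = C" using True by simp
    finally have "norm (opa (Msum n) u) \<le> C" .
    moreover have "0 \<le> real N0 * norm u" by simp
    ultimately show ?thesis unfolding K_def by linarith
  next
    case False
    have "norm (opa (Msum n) u) \<le> norm (Msum n) * norm u" by (rule opa_norm)
    also have "\<dots> \<le> real n * norm u" by (intro mult_right_mono norm_Msum) simp
    also have "\<dots> \<le> real N0 * norm u"
    proof (cases "n \<ge> 1")
      case True then have "n < N0" using False by auto
      then show ?thesis by (intro mult_right_mono) auto
    next
      case False then have "n = 0" by simp
      then show ?thesis by simp
    qed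
    finally show ?thesis using C by (simp add: K_def)
  qed
  have Rb: "norm (opa (Rsum N) u) \<le> K" if N: "N \<ge> 1" for N
  proof -
    have "norm (opa (Rsum N) u) = (1 / real N) * norm (\<Sum>n\<in>{1..N}. opa (Msum n) u)"
      by (simp add: Rsum_def opa_scaleR opa_sum)
    also have "\<dots> \<le> (1 / real N) * (\<Sum>n\<in>{1..N}. K)"
      by (intro mult_left_mono order_trans[OF norm_sum] sum_mono Kb) simp
    also have "\<dots> = K" using N by simp
    finally show ?thesis .
  qed
  have "norm (opa (Et t) u) \<le> (norm u + K + C) / t" if t: "t \<ge> 1" for t
  proof -
    define N where "N = max N0 (nat \<lceil>t\<rceil>)"
    have "t \<le> real (nat \<lceil>t\<rceil>)" by (rule real_nat_ceiling_ge)
    also have "\<dots> \<le> real N" unfolding N_def by simp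
    finally have tN: "t \<le> real N" .
    then have N1: "N \<ge> 1" using t by linarith
    have t0: "t > 0" using t by simp
    have "norm (opa (Mn N) u) \<le> C / real N" by (rule hyp) (simp add: N_def)
    also have "\<dots> \<le> C / t" using C t0 tN by (intro divide_left_mono) auto
    finally have m: "norm (opa (Mn N) u) \<le> C / t" .
    have "norm (u + opa (Rsum N) u) \<le> norm u + K"
      using norm_triangle_ineq[of u "opa (Rsum N) u"] Rb[OF N1] by simp
    then have r: "norm (u + opa (Rsum N) u) / t \<le> (norm u + K) / t"
      using t0 by (intro divide_right_mono) auto
    have "norm (opa (Et t) u) \<le> norm (u + opa (Rsum N) u) / t + norm (opa (Mn N) u)"
      by (rule est_main[OF N1 t0])
    also have "\<dots> \<le> (norm u + K) / t + C / t" using r m by simp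
    also have "\<dots> = (norm u + K + C) / t" by (simp add: add_divide_distrib)
    finally show ?thesis .
  qed
  then show ?thesis by blast
qed

lemma opa_A_const: "opa Aop (const_bcontfun c) = 0"
  by (rule bcontfun_eqI) (simp add: opa_A_fun rdv_op_def shiftR_def shiftL_def)

lemma opa_Et_const: "t \<ge> 0 \<Longrightarrow> opa (Et t) (const_bcontfun c) = const_bcontfun c"
  using Et_mvt[of t "const_bcontfun c"] by (simp add: opa_A_const)

lemma opa_T_const: "opa Top (const_bcontfun c) = const_bcontfun c"
  by (rule bcontfun_eqI) (simp add: opa_T_apply)

lemma opa_Tpow_const: "opa (Top ^ j) (const_bcontfun c) = const_bcontfun c"
  by (induction j) (simp_all add: opa_one opa_mult opa_T_const)

lemma opa_Mn_const: "n \<ge> 1 \<Longrightarrow> opa (Mn n) (const_bcontfun c) = const_bcontfun c"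
  by (simp add: Mn_def Msum_def opa_scaleR opa_sum opa_Tpow_const sum_constant_scaleR)

lemma ul_iff:
  fixes f :: "'i \<Rightarrow> linf"
  shows "uniform_limit UNIV (\<lambda>i k. apply_bcontfun (f i) k) (\<lambda>k. c) F \<longleftrightarrow> (f \<longlongrightarrow> const_bcontfun c) F"
proof
  assume "uniform_limit UNIV (\<lambda>i k. apply_bcontfun (f i) k) (\<lambda>k. c) F"
  then have "uniform_limit UNIV (\<lambda>i k. apply_bcontfun (f i) k) (apply_bcontfun (const_bcontfun c)) F"
    by simp
  then show "(f \<longlongrightarrow> const_bcontfun c) F" by (rule uniform_limit_tendsto_bcontfun)
next
  assume "(f \<longlongrightarrow> const_bcontfun c) F"
  from tendsto_bcontfun_uniform_limit[OF this]
  show "uniform_limit UNIV (\<lambda>i k. apply_bcontfun (f i) k) (\<lambda>k. c) F" by simp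
qed

lemma sup_norm: "(SUP k. cmod (apply_bcontfun w k - c)) = norm (w - const_bcontfun c)"
  by (simp add: norm_bcontfun_def dist_bcontfun.rep_eq dist_norm)

lemma harm_const:
  assumes A: "opa Aop w = 0"
  shows "w = const_bcontfun (apply_bcontfun w 0)"
proof -
  define f where "f = apply_bcontfun w"
  have h: "(f (k - 1) + f (k + 1)) / 2 - f k = 0" for k
  proof -
    have "rdv_op f k = apply_bcontfun (opa Aop w) k" by (simp add: opa_A_fun f_def)
    then show ?thesis using A by (simp add: rdv_op_def shiftR_def shiftL_def)
  qed
  define d where "d k = f (k + 1) - f k" for k
  have dd: "d k = d (k - 1)" for k
  proof -
    have "f (k - 1) + f (k + 1) = 2 * f k" using h[of k] by (simp add: field_simps)
    then show ?thesis by (simp add: d_def algebra_simps)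
  qed
  have d0: "d k = d 0" for k
  proof (induction k rule: int_induct[where k = 0])
    case base then show ?case by simp
  next
    case (step1 i) then show ?case using dd[of "i + 1"] by simp
  next
    case (step2 i) then show ?case using dd[of i] by simp
  qed
  have fk: "f k = f 0 + of_int k * d 0" for k
  proof (induction k rule: int_induct[where k = 0])
    case base then show ?case by simp
  next
    case (step1 i)
    have "f (i + 1) = f i + d i" by (simp add: d_def)
    then show ?case using step1 d0[of i] by (simp add: algebra_simps)
  next
    case (step2 i)
    have "f i = f (i - 1) + d (i - 1)" by (simp add: d_def)
    then show ?case using step2 d0[of "i - 1"] by (simp add: algebra_simps)
  qed
  have bnd: "cmod (f k) \<le> norm w" for k unfolding f_def by (rule norm_bounded)
  have "d 0 = 0"
  proof (rule ccontr)
    assume nz: "d 0 \<noteq> 0"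
    then have "cmod (d 0) > 0" by simp
    from ex_less_of_nat_mult[OF this, of "2 * norm w"]
    obtain n :: nat where n: "2 * norm w < real n * cmod (d 0)" by auto
    have "f (int n) - f 0 = of_nat n * d 0" using fk[of "int n"] by simp
    then have "real n * cmod (d 0) = cmod (f (int n) - f 0)" by (simp add: norm_mult)
    also have "\<dots> \<le> cmod (f (int n)) + cmod (f 0)" by (rule norm_triangle_ineq4)
    also have "\<dots> \<le> 2 * norm w" using bnd[of "int n"] bnd[of 0] by simp
    finally show False using n by simp
  qed
  then have "f k = f 0" for k using fk[of k] by simp
  then show ?thesis by (intro bcontfun_eqI) (simp add: f_def)
qed

lemma bl_opa_right: "bounded_linear (opa X)"
  unfolding opa_def by (rule blinfun.bounded_linear_right)

lemma M2P:
  assumes bdd: "bounded (range x0)"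
    and Q: "((\<lambda>n. opa (Mn n) (Bcontfun x0)) \<longlongrightarrow> const_bcontfun c) sequentially"
  shows "((\<lambda>t. opa (Et t) (Bcontfun x0)) \<longlongrightarrow> const_bcontfun c) at_top"
proof -
  let ?u = "Bcontfun x0 - const_bcontfun c"
  have "((\<lambda>n. opa (Mn n) (Bcontfun x0) - const_bcontfun c) \<longlongrightarrow> 0) sequentially"
    using Q by (simp add: LIM_zero_iff)
  moreover have "eventually (\<lambda>n. opa (Mn n) (Bcontfun x0) - const_bcontfun c = opa (Mn n) ?u) sequentially"
    using eventually_ge_at_top[of "1::nat"]
    by eventually_elim (simp add: opa_diff_right opa_Mn_const)
  ultimately have "((\<lambda>n. opa (Mn n) ?u) \<longlongrightarrow> 0) sequentially"
    by (rule Lim_transform_eventually)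
  then have E: "((\<lambda>t. opa (Et t) ?u) \<longlongrightarrow> 0) at_top" by (rule core_qual)
  moreover have "eventually (\<lambda>t. opa (Et t) ?u = opa (Et t) (Bcontfun x0) - const_bcontfun c) at_top"
    using eventually_ge_at_top[of "0::real"]
    by eventually_elim (simp add: opa_diff_right opa_Et_const)
  ultimately have "((\<lambda>t. opa (Et t) (Bcontfun x0) - const_bcontfun c) \<longlongrightarrow> 0) at_top"
    by (rule Lim_transform_eventually)
  then show ?thesis by (simp add: LIM_zero_iff)
qed

lemma P2M:
  assumes bdd: "bounded (range x0)"
    and P: "((\<lambda>t. opa (Et t) (Bcontfun x0)) \<longlongrightarrow> w) at_top"
  shows "\<exists>c. w = const_bcontfun c \<and> ((\<lambda>n. opa (Mn n) (Bcontfun x0)) \<longlongrightarrow> const_bcontfun c) sequentially"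
proof -
  let ?u = "Bcontfun x0"
  have l1: "((\<lambda>t. opa Aop (opa (Et t) ?u)) \<longlongrightarrow> opa Aop w) at_top"
    by (rule bounded_linear.tendsto[OF bl_opa_right P])
  have l2: "((\<lambda>t. opa Aop (opa (Et t) ?u)) \<longlongrightarrow> 0) at_top"
  proof (rule tendstoI)
    fix e :: real assume e: "e > 0"
    have "\<forall>t\<ge>(norm ?u + 1) / e. dist (opa Aop (opa (Et t) ?u)) 0 < e"
    proof (intro allI impI)
      fix t assume t: "t \<ge> (norm ?u + 1) / e"
      have tp: "t > 0" using t e by (smt (verit) divide_pos_pos norm_ge_zero)
      have "opa Aop (opa (Et t) ?u) = opa (Et t * Aop) ?u"
        by (simp add: opa_mult[symmetric] Et_def exp_times_scaleR_commute)
      then have "norm (opa Aop (opa (Et t) ?u)) \<le> norm (Et t * Aop) * norm ?u"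
        by (simp add: opa_norm)
      also have "\<dots> \<le> (1 / t) * norm ?u" by (intro mult_right_mono norm_EtA tp) simp
      also have "\<dots> < e"
      proof -
        have "norm ?u + 1 \<le> t * e" using t e by (simp add: divide_le_eq mult.commute)
        then have "norm ?u < t * e" by simp
        then show ?thesis using tp by (simp add: divide_less_eq mult.commute)
      qed
      finally show "dist (opa Aop (opa (Et t) ?u)) 0 < e" by simp
    qed
    then show "eventually (\<lambda>t. dist (opa Aop (opa (Et t) ?u)) 0 < e) at_top"
      unfolding eventually_at_top_linorder by blast
  qed
  have "opa Aop w = 0" using tendsto_unique[OF _ l1 l2] by simp
  then have wc: "w = const_bcontfun (apply_bcontfun w 0)" by (rule harm_const)
  define c where "c = apply_bcontfun w 0"
  have "((\<lambda>n. opa (Mn n) ?u) \<longlongrightarrow> const_bcontfun c) sequentially"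
  proof (rule tendstoI)
    fix e :: real assume e: "e > 0"
    from tendstoD[OF P, of "e/2"] e
    have "eventually (\<lambda>t. dist (opa (Et t) ?u) w < e/2) at_top" by simp
    then obtain t0 where t0: "\<And>t. t \<ge> t0 \<Longrightarrow> dist (opa (Et t) ?u) w < e/2"
      unfolding eventually_at_top_linorder by blast
    define t where "t = max t0 0"
    have tpos: "t \<ge> 0" and tw: "norm (opa (Et t) ?u - w) < e/2"
      using t0[of t] by (auto simp: t_def dist_norm)
    define N where "N = nat \<lceil>4 * t * norm ?u / e\<rceil> + 1"
    have "\<forall>n\<ge>N. dist (opa (Mn n) ?u) (const_bcontfun c) < e"
    proof (intro allI impI)
      fix n assume nN: "n \<ge> N"
      then have n1: "n \<ge> 1" by (simp add: N_def)
      have nr: "4 * t * norm ?u / e < real n"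
      proof -
        have "4 * t * norm ?u / e \<le> real (nat \<lceil>4 * t * norm ?u / e\<rceil>)" by (rule real_nat_ceiling_ge)
        also have "\<dots> < real N" by (simp add: N_def)
        also have "\<dots> \<le> real n" using nN by simp
        finally show ?thesis .
      qed
      have split: "opa (Mn n) ?u - const_bcontfun c
          = (opa (Mn n) ?u - opa (Et t) (opa (Mn n) ?u)) + opa (Mn n) (opa (Et t) ?u - w)"
      proof -
        have "opa (Mn n) (opa (Et t) ?u) = opa (Et t) (opa (Mn n) ?u)"
          by (simp add: opa_mult[symmetric] Et_Mn_comm)
        moreover have "opa (Mn n) w = const_bcontfun c"
        proof -
          have wcc: "w = const_bcontfun c" using wc by (simp add: c_def)
          show ?thesis unfolding wcc by (rule opa_Mn_const[OF n1])
        qed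
        ultimately show ?thesis by (simp add: opa_diff_right)
      qed
      have b1: "norm (opa (Mn n) ?u - opa (Et t) (opa (Mn n) ?u)) \<le> t * (2 / real n * norm ?u)"
      proof -
        have "norm (opa (Et t) (opa (Mn n) ?u) - opa (Mn n) ?u) \<le> t * norm (opa Aop (opa (Mn n) ?u))"
          by (rule Et_mvt[OF tpos])
        also have "\<dots> \<le> t * (2 / real n * norm ?u)"
        proof (intro mult_left_mono tpos)
          have "norm (opa Aop (opa (Mn n) ?u)) = norm (opa (Aop * Mn n) ?u)" by (simp add: opa_mult)
          also have "\<dots> \<le> norm (Aop * Mn n) * norm ?u" by (rule opa_norm)
          also have "\<dots> \<le> 2 / real n * norm ?u" by (intro mult_right_mono norm_A_Mn) simp
          finally show "norm (opa Aop (opa (Mn n) ?u)) \<le> 2 / real n * norm ?u" .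
        qed
        finally show ?thesis by (simp add: norm_minus_commute)
      qed
      have b2: "norm (opa (Mn n) (opa (Et t) ?u - w)) < e/2"
      proof -
        have "norm (opa (Mn n) (opa (Et t) ?u - w)) \<le> norm (Mn n) * norm (opa (Et t) ?u - w)"
          by (rule opa_norm)
        also have "\<dots> \<le> 1 * norm (opa (Et t) ?u - w)" by (intro mult_right_mono norm_Mn) simp
        finally show ?thesis using tw by simp
      qed
      have b3: "t * (2 / real n * norm ?u) < e / 2"
      proof -
        have np: "real n > 0" using n1 by simp
        have "4 * t * norm ?u < real n * e" using nr e by (simp add: divide_less_eq mult.commute)
        then have "t * (2 * norm ?u) < real n * (e / 2)" by simp
        then show ?thesis using np by (simp add: field_simps)
      qed
      have "norm (opa (Mn n) ?u - const_bcontfun c) < e"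
        unfolding split using norm_triangle_ineq[of "opa (Mn n) ?u - opa (Et t) (opa (Mn n) ?u)"
            "opa (Mn n) (opa (Et t) ?u - w)"] b1 b2 b3 by linarith
      then show "dist (opa (Mn n) ?u) (const_bcontfun c) < e" by (simp add: dist_norm)
    qed
    then show "eventually (\<lambda>n. dist (opa (Mn n) ?u) (const_bcontfun c) < e) sequentially"
      unfolding eventually_sequentially by blast
  qed
  then show ?thesis using wc c_def by blast
qed

theorem theorem3:
  fixes x0 :: "int \<Rightarrow> complex"
  assumes bdd: "bounded (range x0)"
  shows "(good x0 \<longleftrightarrow> (\<exists>c. uniform_limit UNIV (rdv_avg x0) (\<lambda>k. c) sequentially))
    \<and> (\<forall>c. uniform_limit UNIV (rdv_avg x0) (\<lambda>k. c) sequentially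
          \<longrightarrow> uniform_limit UNIV (rdv_sol x0) (\<lambda>k. c) at_top)
    \<and> (\<forall>c. (\<lambda>n. SUP k. cmod (rdv_avg x0 n k - c)) \<in> O(\<lambda>n. 1 / real n)
          \<longrightarrow> (\<lambda>t. SUP k. cmod (rdv_sol x0 t k - c)) \<in> O(\<lambda>t. 1 / t))"
proof -
  let ?u = "Bcontfun x0"
  define P where "P t = opa (Et t) ?u" for t
  define Q where "Q n = opa (Mn n) ?u" for n
  have solF: "rdv_sol x0 = (\<lambda>t k. apply_bcontfun (P t) k)"
    by (intro ext) (simp add: P_def sol_eq[OF bdd])
  have avgF: "rdv_avg x0 = (\<lambda>n k. apply_bcontfun (Q n) k)"
    by (intro ext) (simp add: Q_def avg_eq[OF bdd])
  have part2: "uniform_limit UNIV (rdv_sol x0) (\<lambda>k. c) at_top"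
    if "uniform_limit UNIV (rdv_avg x0) (\<lambda>k. c) sequentially" for c
  proof -
    have "(Q \<longlongrightarrow> const_bcontfun c) sequentially" using that unfolding avgF ul_iff .
    then have "(P \<longlongrightarrow> const_bcontfun c) at_top" unfolding P_def Q_def by (rule M2P[OF bdd])
    then show ?thesis unfolding solF ul_iff .
  qed
  have part1: "good x0 \<longleftrightarrow> (\<exists>c. uniform_limit UNIV (rdv_avg x0) (\<lambda>k. c) sequentially)"
  proof
    assume "good x0"
    then obtain cf where "uniform_limit UNIV (rdv_sol x0) cf at_top" unfolding good_def by blast
    then have "uniform_limit UNIV (\<lambda>t k. apply_bcontfun (P t) k) cf at_top" unfolding solF .
    from uniform_limit_bcontfunE[OF this trivial_limit_at_top_linorder]
    obtain l' where "(P \<longlongrightarrow> l') at_top" by metis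
    from P2M[OF bdd this[unfolded P_def]] obtain c where
      "(Q \<longlongrightarrow> const_bcontfun c) sequentially" unfolding Q_def by blast
    then have "uniform_limit UNIV (rdv_avg x0) (\<lambda>k. c) sequentially" unfolding avgF ul_iff .
    then show "\<exists>c. uniform_limit UNIV (rdv_avg x0) (\<lambda>k. c) sequentially" by blast
  next
    assume "\<exists>c. uniform_limit UNIV (rdv_avg x0) (\<lambda>k. c) sequentially"
    then obtain c where "uniform_limit UNIV (rdv_avg x0) (\<lambda>k. c) sequentially" by blast
    then have "uniform_limit UNIV (rdv_sol x0) (\<lambda>k. c) at_top" by (rule part2)
    then show "good x0" unfolding good_def by blast
  qed
  have part3: "(\<lambda>t. SUP k. cmod (rdv_sol x0 t k - c)) \<in> O(\<lambda>t. 1 / t)"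
    if hyp: "(\<lambda>n. SUP k. cmod (rdv_avg x0 n k - c)) \<in> O(\<lambda>n. 1 / real n)" for c
  proof -
    let ?v = "?u - const_bcontfun c"
    from hyp obtain C where C: "C > 0"
      and ev: "eventually (\<lambda>n. norm (SUP k. cmod (rdv_avg x0 n k - c)) \<le> C * norm (1 / real n)) at_top"
      by (rule landau_o.bigE)
    from ev obtain N0 where N0: "\<And>n. n \<ge> N0 \<Longrightarrow>
        norm (SUP k. cmod (rdv_avg x0 n k - c)) \<le> C * norm (1 / real n)"
      unfolding eventually_at_top_linorder by blast
    have hb: "norm (opa (Mn n) ?v) \<le> C / real n" if n: "n \<ge> max N0 1" for n
    proof -
      have "opa (Mn n) ?v = Q n - const_bcontfun c"
        using n by (simp add: Q_def opa_diff_right opa_Mn_const)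
      then have eq1: "norm (opa (Mn n) ?v) = (SUP k. cmod (rdv_avg x0 n k - c))"
        by (simp add: avgF sup_norm)
      have nn: "0 \<le> (SUP k. cmod (rdv_avg x0 n k - c))" using eq1 norm_ge_zero by metis
      have "norm (opa (Mn n) ?v) = norm (SUP k. cmod (rdv_avg x0 n k - c))" using eq1 nn by simp
      also have "\<dots> \<le> C * norm (1 / real n)" using N0[of n] n by simp
      also have "\<dots> = C / real n" by simp
      finally show ?thesis .
    qed
    obtain C' where C': "\<And>t. t \<ge> 1 \<Longrightarrow> norm (opa (Et t) ?v) \<le> C' / t"
      using core_rate[of C "max N0 1" ?v] C hb by auto
    show ?thesis
    proof (rule landau_o.bigI[of "max C' 1"])
      show "max C' 1 > 0" by simp
      have "norm (SUP k. cmod (rdv_sol x0 t k - c)) \<le> max C' 1 * norm (1 / t)" if t: "t \<ge> 1" for t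
      proof -
        have "opa (Et t) ?v = P t - const_bcontfun c"
          using t by (simp add: P_def opa_diff_right opa_Et_const)
        then have eq: "(SUP k. cmod (rdv_sol x0 t k - c)) = norm (opa (Et t) ?v)"
          by (simp add: solF sup_norm)
        have "norm (SUP k. cmod (rdv_sol x0 t k - c)) = norm (opa (Et t) ?v)" by (simp add: eq)
        also have "\<dots> \<le> C' / t" by (rule C'[OF t])
        also have "\<dots> \<le> max C' 1 / t" using t by (intro divide_right_mono) auto
        also have "\<dots> = max C' 1 * norm (1 / t)" using t by simp
        finally show ?thesis .
      qed
      then show "eventually (\<lambda>t. norm (SUP k. cmod (rdv_sol x0 t k - c)) \<le> max C' 1 * norm (1 / t)) at_top"
        unfolding eventually_at_top_linorder by blast
    qed
  qed
  show ?thesis using part1 part2 part3 by blast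
qed

end
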